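(* Let $m\ge 2$ and let $t,r_2$ be integers with $t\ge 0$ and $0\le r_2\le \lfloor\frac{m-1}{2}\rfloor-t$. Put $C_1=\mathrm{RM}(\lfloor\frac{m-1}{2}\rfloor-t,m)$ and $C_2=\mathrm{RM}(r_2,m)$ (so that $C_2\subseteq C_1$). Then $(C_1,C_2)$ is a binary CSS-$T$ pair if and only if $$\begin{cases} r_2\le 2t+1 & \text{if } m \text{ is even},\\ r_2\le 2t & \text{if } m \text{ is odd}.\end{cases}$$
   Context: $\mathrm{RM}(r,m)\subseteq\mathbb F_2^{2^m}$ is the binary Reed–Muller code of order $r$: the set of evaluation vectors, at all points of $\mathbb F_2^m$ in a fixed order, of polynomials in $\mathbb F_2[x_1,\dots,x_m]$ of degree at most $r$. The Hamming weight $\omega^{\mathrm H}(x)$ is the number of nonzero coordinates of $x$; $C^\perp$ is the dual with respect to the standard inner product. A pair of binary linear codes $(C_1,C_2)$ with $C_2\subseteq C_1\subseteq\mathbb F_2^n$ is a binary CSS-$T$ pair if (i) every $x\in C_2$ has even Hamming weight, and (ii) for every $x\in C_2$ there exists a linear code $C_x\subseteq C_1^\perp$ of dimension $\omega^{\mathrm H}(x)/2$ which is supported on $x$ (every $y\in C_x$ has $y_i=0$ whenever $x_i=0$) and is self-dual when regarded as a code of length $\omega^{\mathrm H}(x)$ on the support of $x$. *)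

theory Defs
  imports Main "HOL-Library.Z2" "HOL-Library.Function_Algebras"
begin

text \<open>Binary vectors are functions into the field bit = GF(2), indexed by a
  finite coordinate set I (values outside I are 0).\<close>

definition vecs :: "'i set \<Rightarrow> ('i \<Rightarrow> bit) set" where
  "vecs I = {x. \<forall>i. i \<notin> I \<longrightarrow> x i = 0}"

definition supp :: "('i \<Rightarrow> bit) \<Rightarrow> 'i set" where
  "supp x = {i. x i \<noteq> 0}"

definition hw :: "('i \<Rightarrow> bit) \<Rightarrow> nat" where
  "hw x = card (supp x)"

definition lin_code :: "'i set \<Rightarrow> ('i \<Rightarrow> bit) set \<Rightarrow> bool" where
  "lin_code I C \<longleftrightarrow> C \<subseteq> vecs I \<and> 0 \<in> C \<and>
     (\<forall>x\<in>C. \<forall>y\<in>C. x + y \<in> C) \<and> (\<forall>a::bit. \<forall>x\<in>C. (\<lambda>i. a * x i) \<in> C)"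

definition ip :: "'i set \<Rightarrow> ('i \<Rightarrow> bit) \<Rightarrow> ('i \<Rightarrow> bit) \<Rightarrow> bit" where
  "ip I x y = (\<Sum>i\<in>I. x i * y i)"

definition dual :: "'i set \<Rightarrow> ('i \<Rightarrow> bit) set \<Rightarrow> ('i \<Rightarrow> bit) set" where
  "dual I C = {y \<in> vecs I. \<forall>x\<in>C. ip I x y = 0}"

definition span2 :: "('i \<Rightarrow> bit) set \<Rightarrow> ('i \<Rightarrow> bit) set" where
  "span2 B = {(\<Sum>b\<in>B. (\<lambda>i. c b * b i)) | c. True}"

definition indep2 :: "('i \<Rightarrow> bit) set \<Rightarrow> bool" where
  "indep2 B \<longleftrightarrow> (\<forall>c. (\<Sum>b\<in>B. (\<lambda>i. c b * b i)) = 0 \<longrightarrow> (\<forall>b\<in>B. c b = 0))"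

definition has_dim :: "('i \<Rightarrow> bit) set \<Rightarrow> nat \<Rightarrow> bool" where
  "has_dim C k \<longleftrightarrow> (\<exists>B. finite B \<and> B \<subseteq> C \<and> card B = k \<and> indep2 B \<and> span2 B = C)"

definition css_t_pair :: "'i set \<Rightarrow> ('i \<Rightarrow> bit) set \<Rightarrow> ('i \<Rightarrow> bit) set \<Rightarrow> bool" where
  "css_t_pair I C1 C2 \<longleftrightarrow>
     lin_code I C1 \<and> lin_code I C2 \<and> C2 \<subseteq> C1 \<and>
     (\<forall>x\<in>C2. even (hw x)) \<and>
     (\<forall>x\<in>C2. \<exists>Cx. lin_code I Cx \<and> Cx \<subseteq> dual I C1 \<and> has_dim Cx (hw x div 2) \<and>
        Cx \<subseteq> vecs (supp x) \<and> dual (supp x) Cx = Cx)"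

text \<open>Points of GF(2)^m: functions nat => bit vanishing at indices >= m.\<close>
definition pts :: "nat \<Rightarrow> (nat \<Rightarrow> bit) set" where
  "pts m = {p. \<forall>i\<ge>m. p i = 0}"

text \<open>Exponent vectors of monomials in x_0..x_(m-1) of total degree at most r.\<close>
definition rm_monos :: "nat \<Rightarrow> nat \<Rightarrow> (nat \<Rightarrow> nat) set" where
  "rm_monos m r = {e. (\<forall>i\<ge>m. e i = 0) \<and> (\<Sum>i<m. e i) \<le> r}"

text \<open>Coordinates are indexed by the points themselves.\<close>
definition RM :: "nat \<Rightarrow> nat \<Rightarrow> ((nat \<Rightarrow> bit) \<Rightarrow> bit) set" where
  "RM r m = {f. \<exists>c :: (nat \<Rightarrow> nat) \<Rightarrow> bit.
      f = (\<lambda>p. if p \<in> pts m then (\<Sum>e\<in>rm_monos m r. c e * (\<Prod>i<m. p i ^ e i)) else 0)}"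

end

theory Submission
  imports Defs
begin


lemma bit_cases2: "(x::bit) = 0 \<or> x = 1" by (cases x) auto
lemma bit_add_self [simp]: "(x::bit) + x = 0" by (cases x) auto
lemma bit_mult_self [simp]: "(x::bit) * x = x" by (cases x) auto
lemma fun_add_self [simp]: "(f::'i \<Rightarrow> bit) + f = 0" by (simp add: fun_eq_iff)
lemma of_nat_bit: "(of_nat n :: bit) = (if even n then 0 else 1)"
  by (induction n) auto

declare mult_bit_eq_and [simp del] add_bit_eq_xor [simp del]

lemma span2_empty [simp]: "span2 {} = {0}"
  by (auto simp: span2_def)

lemma span2_insert:
  assumes "finite B" "v \<notin> B"
  shows "span2 (insert v B) = span2 B \<union> (\<lambda>s. s + v) ` span2 B"
proof
  show "span2 (insert v B) \<subseteq> span2 B \<union> (\<lambda>s. s + v) ` span2 B"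
  proof
    fix x assume "x \<in> span2 (insert v B)"
    then obtain c where x: "x = (\<Sum>b\<in>insert v B. (\<lambda>i. c b * b i))" by (auto simp: span2_def)
    define s where "s = (\<Sum>b\<in>B. (\<lambda>i. c b * b i))"
    have s: "s \<in> span2 B" unfolding s_def span2_def by blast
    have xe: "x = (\<lambda>i. c v * v i) + s" using assms x s_def by simp
    then show "x \<in> span2 B \<union> (\<lambda>s. s + v) ` span2 B"
    proof (cases "c v = 0")
      case True
      then have "x = s" using xe by (simp add: zero_fun_def[symmetric])
      then show ?thesis using s by blast
    next
      case False
      then have "c v = 1" by simp
      then have "x = s + v" using xe by (simp add: add.commute)
      then show ?thesis using s by blast
    qed
  qed
next
  have A: "span2 B \<subseteq> span2 (insert v B)"
  proof
    fix x assume "x \<in> span2 B"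
    then obtain c where x: "x = (\<Sum>b\<in>B. (\<lambda>i. c b * b i))" by (auto simp: span2_def)
    define c' where "c' = c(v := 0)"
    have "(\<Sum>b\<in>insert v B. (\<lambda>i. c' b * b i)) = (\<Sum>b\<in>B. (\<lambda>i. c' b * b i))"
      using assms by (simp add: c'_def fun_eq_iff zero_fun_def)
    also have "\<dots> = x" unfolding x using assms(2) by (intro sum.cong) (auto simp: c'_def)
    finally show "x \<in> span2 (insert v B)" unfolding span2_def by blast
  qed
  have B: "(\<lambda>s. s + v) ` span2 B \<subseteq> span2 (insert v B)"
  proof
    fix y assume "y \<in> (\<lambda>s. s + v) ` span2 B"
    then obtain c where y: "y = (\<Sum>b\<in>B. (\<lambda>i. c b * b i)) + v" by (auto simp: span2_def)
    define c' where "c' = c(v := 1)"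
    have "(\<Sum>b\<in>insert v B. (\<lambda>i. c' b * b i)) = v + (\<Sum>b\<in>B. (\<lambda>i. c' b * b i))"
      using assms by (simp add: c'_def)
    also have "(\<Sum>b\<in>B. (\<lambda>i. c' b * b i)) = (\<Sum>b\<in>B. (\<lambda>i. c b * b i))"
      using assms(2) by (intro sum.cong) (auto simp: c'_def)
    finally have "(\<Sum>b\<in>insert v B. (\<lambda>i. c' b * b i)) = y" unfolding y by (simp add: add.commute plus_fun_def)
    then show "y \<in> span2 (insert v B)" unfolding span2_def by blast
  qed
  show "span2 B \<union> (\<lambda>s. s + v) ` span2 B \<subseteq> span2 (insert v B)" using A B by blast
qed

lemma fun_bit_sum_eq0: "(x::'i\<Rightarrow>bit) + y = 0 \<longleftrightarrow> x = y"
proof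
  assume "x + y = 0"
  then have "x + y + y = y" by simp
  then show "x = y" by (simp add: add.assoc)
qed simp

lemma fun_bit_add_cancel: "(x::'i\<Rightarrow>bit) + y + y = x"
  by (simp add: add.assoc)

lemma ip_comm: "ip I x y = ip I y x"
  by (simp add: ip_def mult.commute)
lemma ip_add_left: "ip I (x + y) z = ip I x z + ip I y z"
  by (simp add: ip_def sum.distrib distrib_right)
lemma ip_add_right: "ip I z (x + y) = ip I z x + ip I z y"
  by (simp add: ip_def sum.distrib distrib_left)
lemma ip_zero_left [simp]: "ip I 0 y = 0" by (simp add: ip_def)
lemma ip_zero_right [simp]: "ip I y 0 = 0" by (simp add: ip_def)

lemma vecs_add: "x \<in> vecs S \<Longrightarrow> y \<in> vecs S \<Longrightarrow> x + y \<in> vecs S"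
  by (simp add: vecs_def)
lemma vecs_zero [simp]: "0 \<in> vecs S" by (simp add: vecs_def)

lemma lin_codeI:
  assumes "D \<subseteq> vecs S" "0 \<in> D" "\<And>x y. x \<in> D \<Longrightarrow> y \<in> D \<Longrightarrow> x + y \<in> D"
  shows "lin_code S D"
  unfolding lin_code_def
proof (intro conjI assms(1,2) ballI allI)
  fix x y assume "x \<in> D" "y \<in> D" then show "x + y \<in> D" by (rule assms(3))
next
  fix a :: bit and x assume x: "x \<in> D"
  show "(\<lambda>i. a * x i) \<in> D"
  proof (cases "a = 0")
    case True then show ?thesis using assms(2) by (simp add: zero_fun_def)
  next
    case False then have "a = 1" by simp
    then show ?thesis using x by simp
  qed
qed

lemma lin_code_add: "lin_code S D \<Longrightarrow> x \<in> D \<Longrightarrow> y \<in> D \<Longrightarrow> x + y \<in> D"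
  by (simp add: lin_code_def)
lemma lin_code_zero: "lin_code S D \<Longrightarrow> 0 \<in> D"
  by (simp add: lin_code_def)
lemma lin_code_sub: "lin_code S D \<Longrightarrow> D \<subseteq> vecs S"
  by (simp add: lin_code_def)

lemma span2I: "x = (\<Sum>b\<in>B. (\<lambda>i. c b * b i)) \<Longrightarrow> x \<in> span2 B"
  unfolding span2_def by blast

lemma span2_zero: "0 \<in> span2 B"
proof -
  have "(\<Sum>b\<in>B. (\<lambda>i. (0::bit) * b i)) = 0" by (simp add: zero_fun_def[symmetric])
  then show ?thesis by (rule span2I[OF sym])
qed

lemma span2_add: assumes "x \<in> span2 B" "y \<in> span2 B" shows "x + y \<in> span2 B"
proof -
  obtain c1 where x: "x = (\<Sum>b\<in>B. (\<lambda>i. c1 b * b i))" using assms by (auto simp: span2_def)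
  obtain c2 where y: "y = (\<Sum>b\<in>B. (\<lambda>i. c2 b * b i))" using assms by (auto simp: span2_def)
  have "(\<Sum>b\<in>B. (\<lambda>i. (c1 b + c2 b) * b i)) = (\<Sum>b\<in>B. (\<lambda>i. c1 b * b i) + (\<lambda>i. c2 b * b i))"
    by (intro sum.cong) (auto simp: fun_eq_iff distrib_right)
  also have "\<dots> = x + y" unfolding x y by (simp add: sum.distrib)
  finally show ?thesis by (rule span2I[OF sym])
qed

lemma span2_in: assumes "finite B" "v \<in> B" shows "v \<in> span2 B"
proof -
  have "B = insert v (B - {v})" using assms by blast
  then have "span2 B = span2 (B - {v}) \<union> (\<lambda>s. s + v) ` span2 (B - {v})"
    using span2_insert[of "B - {v}" v] assms by simp
  moreover have "0 + v \<in> (\<lambda>s. s + v) ` span2 (B - {v})" using span2_zero by blast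
  ultimately show ?thesis by simp
qed

lemma span2_closed: assumes "finite B" "B \<subseteq> D" "lin_code S D" shows "span2 B \<subseteq> D"
  using assms
proof (induction B rule: finite_induct)
  case empty then show ?case by (simp add: lin_code_zero)
next
  case (insert v B)
  then show ?case using span2_insert[OF insert(1,2)] lin_code_add[OF insert(5)] by auto
qed

lemma span2_vecs: assumes "finite B" "B \<subseteq> vecs S" shows "span2 B \<subseteq> vecs S"
  using assms
proof (induction B rule: finite_induct)
  case empty then show ?case by simp
next
  case (insert v B)
  have "s + v \<in> vecs S" if "s \<in> span2 B" for s
    using that insert by (intro vecs_add) auto
  then show ?case using span2_insert[OF insert(1,2)] insert by auto
qed

lemma lin_code_span2: assumes "finite B" "B \<subseteq> vecs S" shows "lin_code S (span2 B)"
  by (intro lin_codeI span2_vecs assms span2_zero span2_add)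

lemma indep2_insert:
  assumes "finite B" "v \<notin> B"
  shows "indep2 (insert v B) \<longleftrightarrow> indep2 B \<and> v \<notin> span2 B"
proof -
  have ins: "(\<Sum>b\<in>insert v B. (\<lambda>i. c b * b i)) = (\<lambda>i. c v * v i) + (\<Sum>b\<in>B. (\<lambda>i. c b * b i))" for c
    using assms by simp
  have upd: "(\<Sum>b\<in>B. (\<lambda>i. (c(v:=a)) b * b i)) = (\<Sum>b\<in>B. (\<lambda>i. c b * b i))" for c a
    using assms(2) by (intro sum.cong) auto
  show ?thesis
  proof
    assume ind: "indep2 (insert v B)"
    have "indep2 B" unfolding indep2_def
    proof (intro allI impI ballI)
      fix c b assume c: "(\<Sum>b\<in>B. (\<lambda>i. c b * b i)) = 0" and b: "b \<in> B"
      have "(\<Sum>b\<in>insert v B. (\<lambda>i. (c(v:=0)) b * b i)) = 0"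
        unfolding ins upd c by (simp add: zero_fun_def)
      then have "(c(v:=0)) b = 0" using ind b unfolding indep2_def by blast
      then show "c b = 0" using b assms(2) by (auto split: if_splits)
    qed
    moreover have "v \<notin> span2 B"
    proof
      assume "v \<in> span2 B"
      then obtain c where c: "v = (\<Sum>b\<in>B. (\<lambda>i. c b * b i))" by (auto simp: span2_def)
      have "(\<Sum>b\<in>insert v B. (\<lambda>i. (c(v:=1)) b * b i)) = 0"
        unfolding ins upd c[symmetric] by simp
      then have "(c(v:=1)) v = 0" using ind unfolding indep2_def by blast
      then show False by simp
    qed
    ultimately show "indep2 B \<and> v \<notin> span2 B" by blast
  next
    assume a: "indep2 B \<and> v \<notin> span2 B"
    show "indep2 (insert v B)" unfolding indep2_def
    proof (intro allI impI)
      fix c assume c: "(\<Sum>b\<in>insert v B. (\<lambda>i. c b * b i)) = 0"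
      have cv: "c v = 0"
      proof (rule ccontr)
        assume "c v \<noteq> 0" then have "c v = 1" by simp
        then have "v + (\<Sum>b\<in>B. (\<lambda>i. c b * b i)) = 0" using c unfolding ins by simp
        then have "v = (\<Sum>b\<in>B. (\<lambda>i. c b * b i))" by (simp add: fun_bit_sum_eq0)
        then have "v \<in> span2 B" unfolding span2_def by blast
        then show False using a by blast
      qed
      then have "(\<Sum>b\<in>B. (\<lambda>i. c b * b i)) = 0" using c unfolding ins by (simp add: zero_fun_def[symmetric])
      then have "\<forall>b\<in>B. c b = 0" using a unfolding indep2_def by blast
      then show "\<forall>b\<in>insert v B. c b = 0" using cv by blast
    qed
  qed
qed

lemma card_span2:
  assumes "finite B" "indep2 B"
  shows "finite (span2 B) \<and> card (span2 B) = 2 ^ card B"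
  using assms
proof (induction B rule: finite_induct)
  case empty then show ?case by simp
next
  case (insert v B)
  have iB: "indep2 B" and vn: "v \<notin> span2 B" using indep2_insert[OF insert(1,2)] insert(4) by auto
  have IH: "finite (span2 B)" "card (span2 B) = 2 ^ card B" using insert(3)[OF iB] by auto
  have disj: "span2 B \<inter> (\<lambda>s. s + v) ` span2 B = {}"
  proof (rule ccontr)
    assume "span2 B \<inter> (\<lambda>s. s + v) ` span2 B \<noteq> {}"
    then obtain s s' where "s \<in> span2 B" "s' \<in> span2 B" "s = s' + v" by blast
    moreover have "s + s' = v" using \<open>s = s' + v\<close>
      by (metis add.commute fun_bit_add_cancel)
    ultimately have "s + s' \<in> span2 B" "s + s' = v"
      using span2_add by blast+
    then show False using vn by simp
  qed
  have inj: "inj_on (\<lambda>s. s + v) (span2 B)"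
    by (intro inj_onI) simp
  have "card (span2 (insert v B)) = card (span2 B) + card ((\<lambda>s. s + v) ` span2 B)"
    unfolding span2_insert[OF insert(1,2)] using IH disj by (intro card_Un_disjoint) auto
  also have "\<dots> = 2 ^ card (insert v B)"
    using IH card_image[OF inj] insert(1,2) by simp
  finally show ?case unfolding span2_insert[OF insert(1,2)] using IH by simp
qed

lemma vecs_bij: "bij_betw supp (vecs S) (Pow S)"
proof (rule bij_betw_imageI)
  show "inj_on supp (vecs S)"
  proof (rule inj_onI)
    fix x y assume "supp x = supp y"
    then have "x i \<noteq> 0 \<longleftrightarrow> y i \<noteq> 0" for i
      by (auto simp: supp_def set_eq_iff simp del: bit_not_zero_iff)
    then have "x i = y i" for i
      by (metis bit_not_zero_iff)
    then show "x = y" by auto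
  qed
  show "supp ` vecs S = Pow S"
  proof
    show "supp ` vecs S \<subseteq> Pow S" by (auto simp: supp_def vecs_def)
    show "Pow S \<subseteq> supp ` vecs S"
    proof
      fix T assume "T \<in> Pow S"
      then have "(\<lambda>i. if i \<in> T then 1 else 0) \<in> vecs S" "supp (\<lambda>i. if i \<in> T then (1::bit) else 0) = T"
        by (auto simp: vecs_def supp_def)
      then show "T \<in> supp ` vecs S" by (metis image_eqI)
    qed
  qed
qed

lemma finite_vecs: "finite S \<Longrightarrow> finite (vecs S)"
  using bij_betw_finite[OF vecs_bij[of S]] by simp
lemma card_vecs: "finite S \<Longrightarrow> card (vecs S) = 2 ^ card S"
  using bij_betw_same_card[OF vecs_bij[of S]] by (simp add: card_Pow)

lemma indep2_empty [simp]: "indep2 {}" by (simp add: indep2_def)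

lemma basis_exists:
  assumes S: "finite S" and D: "lin_code S D"
  shows "\<exists>B. finite B \<and> B \<subseteq> D \<and> indep2 B \<and> span2 B = D"
proof -
  have fD: "finite D" using finite_vecs[OF S] lin_code_sub[OF D] finite_subset by blast
  have "\<exists>B'. finite B' \<and> B' \<subseteq> D \<and> indep2 B' \<and> span2 B' = D"
    if "finite B" "B \<subseteq> D" "indep2 B" for B
    using that
  proof (induction "card D - card (span2 B)" arbitrary: B rule: less_induct)
    case (less B)
    have sub: "span2 B \<subseteq> D" using span2_closed[OF less(2,3) D] .
    show ?case
    proof (cases "span2 B = D")
      case True then show ?thesis using less by blast
    next
      case False
      then obtain v where v: "v \<in> D" "v \<notin> span2 B" using sub by blast
      have vB: "v \<notin> B" using v span2_in[OF less(2)] by blast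
      have ind: "indep2 (insert v B)" using indep2_insert[OF less(2) vB] less(4) v by blast
      have sub': "span2 (insert v B) \<subseteq> D" using span2_closed[of "insert v B" D S] less(2,3) v D by blast
      have "v \<in> span2 (insert v B)" using span2_in[of "insert v B" v] less(2) by simp
      moreover have "span2 B \<subseteq> span2 (insert v B)" using span2_insert[OF less(2) vB] by blast
      ultimately have "span2 B \<subset> span2 (insert v B)" using v by blast
      then have "card (span2 B) < card (span2 (insert v B))"
        using psubset_card_mono finite_subset[OF sub' fD] by blast
      moreover have "card (span2 (insert v B)) \<le> card D" using card_mono[OF fD sub'] .
      ultimately have "card D - card (span2 (insert v B)) < card D - card (span2 B)" by linarith
      then show ?thesis using less(1)[of "insert v B"] less(2,3) v ind by blast
    qed
  qed
  from this[of "{}"] show ?thesis by simp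
qed

lemma ip_delta: assumes "finite S" "k \<in> S"
  shows "ip S v (\<lambda>i. if i = k then 1 else 0) = v k"
proof -
  have "ip S v (\<lambda>i. if i = k then 1 else 0) = (\<Sum>i\<in>S. if i = k then v i else 0)"
    unfolding ip_def by (intro sum.cong) auto
  also have "\<dots> = v k" using assms by simp
  finally show ?thesis .
qed

lemma sep:
  assumes "finite S" "finite B" "B \<subseteq> vecs S" "v \<in> vecs S" "v \<notin> span2 B"
  shows "\<exists>y\<in>vecs S. (\<forall>b\<in>B. ip S b y = 0) \<and> ip S v y = 1"
  using assms(2-5)
proof (induction B arbitrary: v rule: finite_induct)
  case empty
  then have "v \<noteq> 0" by simp
  then obtain k where k: "v k \<noteq> 0" by (auto simp: fun_eq_iff)
  then have kS: "k \<in> S" using empty(2) by (auto simp: vecs_def)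
  have "(\<lambda>i. if i = k then 1 else 0) \<in> vecs S" using kS by (auto simp: vecs_def)
  moreover have "ip S v (\<lambda>i. if i = k then 1 else 0) = 1" using ip_delta[OF assms(1) kS] k by simp
  ultimately show ?case by blast
next
  case (insert b B)
  have sp: "span2 (insert b B) = span2 B \<union> (\<lambda>s. s + b) ` span2 B" using span2_insert[OF insert(1,2)] .
  have v1: "v \<notin> span2 B" using insert(6) sp by blast
  have v2: "v + b \<notin> span2 B"
  proof
    assume "v + b \<in> span2 B"
    then have "v + b + b \<in> (\<lambda>s. s + b) ` span2 B" by blast
    then show False using insert(6) sp fun_bit_add_cancel by (metis UnCI)
  qed
  have bS: "b \<in> vecs S" "B \<subseteq> vecs S" using insert(4) by auto
  obtain y1 where y1: "y1 \<in> vecs S" "\<forall>b\<in>B. ip S b y1 = 0" "ip S v y1 = 1"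
    using insert(3)[OF bS(2) insert(5) v1] by blast
  obtain y2 where y2: "y2 \<in> vecs S" "\<forall>b\<in>B. ip S b y2 = 0" "ip S (v + b) y2 = 1"
    using insert(3)[OF bS(2) vecs_add[OF insert(5) bS(1)] v2] by blast
  show ?case
  proof (cases "ip S b y1 = 0")
    case True then show ?thesis using y1 by auto
  next
    case F1: False
    then have b1: "ip S b y1 = 1" by simp
    show ?thesis
    proof (cases "ip S b y2 = 0")
      case True
      then have "ip S v y2 = 1" using y2(3) by (simp add: ip_add_left)
      then show ?thesis using y2 True by auto
    next
      case False
      then have b2: "ip S b y2 = 1" by simp
      then have v2': "ip S v y2 = 0" using y2(3) by (simp add: ip_add_left add_bit_eq_xor)
      have "y1 + y2 \<in> vecs S" using y1 y2 vecs_add by blast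
      moreover have "\<forall>c\<in>insert b B. ip S c (y1 + y2) = 0"
        using y1 y2 b1 b2 by (auto simp: ip_add_right)
      moreover have "ip S v (y1 + y2) = 1" using y1(3) v2' by (simp add: ip_add_right)
      ultimately show ?thesis by blast
    qed
  qed
qed

definition perpB :: "'i set \<Rightarrow> ('i \<Rightarrow> bit) set \<Rightarrow> ('i \<Rightarrow> bit) set" where
  "perpB S B = {y \<in> vecs S. \<forall>b\<in>B. ip S b y = 0}"

lemma span2_perp:
  assumes "finite B" "\<forall>b\<in>B. ip S b y = 0" "s \<in> span2 B"
  shows "ip S s y = 0"
  using assms
proof (induction B arbitrary: s rule: finite_induct)
  case empty then show ?case by (simp del: zero_fun_apply)
next
  case (insert v B)
  have "ip S (s' + v) y = 0" if "s' \<in> span2 B" for s'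
    using that insert by (simp only: ip_add_left) simp
  then show ?case using span2_insert[OF insert(1,2)] insert by blast
qed

lemma dual_span2: assumes "finite B" shows "dual S (span2 B) = perpB S B"
  using span2_perp[OF assms] span2_in[OF assms] unfolding dual_def perpB_def by blast

lemma count_perp:
  assumes S: "finite S" and "finite B" "B \<subseteq> vecs S" "indep2 B"
  shows "card (perpB S B) * 2 ^ card B = 2 ^ card S"
  using assms(2-4)
proof (induction B rule: finite_induct)
  case empty
  then show ?case using card_vecs[OF S] by (simp add: perpB_def)
next
  case (insert v B)
  have iB: "indep2 B" and vn: "v \<notin> span2 B" using indep2_insert[OF insert(1,2)] insert(5) by auto
  have vS: "v \<in> vecs S" "B \<subseteq> vecs S" using insert(4) by auto
  have IH: "card (perpB S B) * 2 ^ card B = 2 ^ card S" using insert(3)[OF vS(2) iB] .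
  obtain y0 where y0: "y0 \<in> vecs S" "\<forall>b\<in>B. ip S b y0 = 0" "ip S v y0 = 1"
    using sep[OF S insert(1) vS(2) vS(1) vn] by blast
  define P0 where "P0 = perpB S (insert v B)"
  define P1 where "P1 = {y \<in> perpB S B. ip S v y = 1}"
  have split: "perpB S B = P0 \<union> P1" unfolding P0_def P1_def perpB_def by auto
  have disj: "P0 \<inter> P1 = {}" unfolding P0_def P1_def perpB_def by auto
  have img: "P1 = (\<lambda>y. y + y0) ` P0"
  proof
    show "P1 \<subseteq> (\<lambda>y. y + y0) ` P0"
    proof
      fix y assume y: "y \<in> P1"
      have "y + y0 \<in> P0" using y y0 unfolding P0_def P1_def perpB_def
        by (auto simp: ip_add_right vecs_add)
      moreover have "y = y + y0 + y0" by (simp add: fun_bit_add_cancel)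
      ultimately show "y \<in> (\<lambda>y. y + y0) ` P0" by blast
    qed
    show "(\<lambda>y. y + y0) ` P0 \<subseteq> P1"
      using y0 unfolding P0_def P1_def perpB_def by (auto simp: ip_add_right vecs_add)
  qed
  have fin: "finite (perpB S B)" using finite_vecs[OF S] unfolding perpB_def by auto
  then have f0: "finite P0" "finite P1" using split by auto
  have inj: "inj_on (\<lambda>y. y + y0) P0" by (intro inj_onI) simp
  have "card (perpB S B) = card P0 + card P1" unfolding split using f0 disj by (simp add: card_Un_disjoint)
  also have "card P1 = card P0" unfolding img using card_image[OF inj] .
  finally have "card (perpB S B) = 2 * card P0" by simp
  then show ?case using IH insert(1,2) unfolding P0_def by simp
qed



definition selforth :: "'i set \<Rightarrow> ('i \<Rightarrow> bit) set \<Rightarrow> bool" where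
  "selforth S D \<longleftrightarrow> lin_code S D \<and> (\<forall>a\<in>D. \<forall>b\<in>D. ip S a b = 0)"

lemma extend_so:
  assumes so: "selforth S D" and y: "y \<in> vecs S" "ip S y y = 0" "\<forall>d\<in>D. ip S d y = 0"
  shows "selforth S (D \<union> (\<lambda>d. d + y) ` D)"
proof -
  have L: "lin_code S D" and O: "\<forall>a\<in>D. \<forall>b\<in>D. ip S a b = 0" using so by (auto simp: selforth_def)
  have "lin_code S (D \<union> (\<lambda>d. d + y) ` D)"
  proof (rule lin_codeI)
    show "D \<union> (\<lambda>d. d + y) ` D \<subseteq> vecs S" using lin_code_sub[OF L] y(1) vecs_add by blast
    show "0 \<in> D \<union> (\<lambda>d. d + y) ` D" using lin_code_zero[OF L] by blast
    fix a b assume a: "a \<in> D \<union> (\<lambda>d. d + y) ` D" and b: "b \<in> D \<union> (\<lambda>d. d + y) ` D"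
    have cl: "d1 + d2 \<in> D" if "d1 \<in> D" "d2 \<in> D" for d1 d2 using lin_code_add[OF L that] .
    show "a + b \<in> D \<union> (\<lambda>d. d + y) ` D"
    proof -
      { fix d1 d2 assume "d1 \<in> D" "d2 \<in> D"
        then have "d1 + d2 \<in> D \<union> (\<lambda>d. d + y) ` D"
            "d1 + (d2 + y) \<in> D \<union> (\<lambda>d. d + y) ` D"
            "(d1 + y) + d2 \<in> D \<union> (\<lambda>d. d + y) ` D"
            "(d1 + y) + (d2 + y) \<in> D \<union> (\<lambda>d. d + y) ` D"
        proof -
          assume d: "d1 \<in> D" "d2 \<in> D"
          show "d1 + d2 \<in> D \<union> (\<lambda>d. d + y) ` D" using cl[OF d] by blast
          have "d1 + (d2 + y) = (d1 + d2) + y" by (simp add: add.assoc)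
          then show "d1 + (d2 + y) \<in> D \<union> (\<lambda>d. d + y) ` D" using cl[OF d] by blast
          have "(d1 + y) + d2 = (d1 + d2) + y" by (simp add: add.assoc add.commute add.left_commute)
          then show "(d1 + y) + d2 \<in> D \<union> (\<lambda>d. d + y) ` D" using cl[OF d] by blast
          have "(d1 + y) + (d2 + y) = d1 + d2 + (y + y)" by (simp add: add_ac)
          then have "(d1 + y) + (d2 + y) = d1 + d2" by simp
          then show "(d1 + y) + (d2 + y) \<in> D \<union> (\<lambda>d. d + y) ` D" using cl[OF d] by simp
        qed }
      then show ?thesis using a b by blast
    qed
  qed
  moreover have "\<forall>a\<in>D \<union> (\<lambda>d. d + y) ` D. \<forall>b\<in>D \<union> (\<lambda>d. d + y) ` D. ip S a b = 0"
  proof -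
    { fix d1 d2 assume d: "d1 \<in> D" "d2 \<in> D"
      have "ip S d1 d2 = 0" using O d by blast
      moreover have "ip S d1 (d2 + y) = 0" using O d y by (simp add: ip_add_right)
      moreover have "ip S (d1 + y) d2 = 0" using O d y by (simp add: ip_add_left ip_comm[of S y d2])
      moreover have "ip S (d1 + y) (d2 + y) = 0" using O d y
        by (simp add: ip_add_left ip_add_right ip_comm[of S y d2])
      ultimately have "ip S d1 d2 = 0 \<and> ip S d1 (d2 + y) = 0 \<and> ip S (d1 + y) d2 = 0 \<and> ip S (d1 + y) (d2 + y) = 0"
        by blast }
    then show ?thesis by blast
  qed
  ultimately show ?thesis unfolding selforth_def by blast
qed

lemma sum_bits_card:
  assumes "finite S"
  shows "(\<Sum>i\<in>S. (1::bit)) = (if even (card S) then 0 else 1)"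
  by (simp add: of_nat_bit)

lemma self_dual_ext:
  assumes S: "finite S" and ev: "even (card S)" and A: "selforth S A"
  shows "\<exists>D. lin_code S D \<and> A \<subseteq> D \<and> dual S D = D \<and> has_dim D (card S div 2)"
proof -
  define F where "F = {D. selforth S D \<and> A \<subseteq> D}"
  have FP: "F \<subseteq> Pow (vecs S)" unfolding F_def selforth_def lin_code_def by auto
  have fF: "finite F" using finite_subset[OF FP] finite_vecs[OF S] by blast
  have AF: "A \<in> F" using A unfolding F_def by blast
  define n where "n = Max (card ` F)"
  have "n \<in> card ` F" unfolding n_def using fF AF by (intro Max_in) auto
  then obtain D where DF: "D \<in> F" and Dn: "card D = n" by blast
  have maxc: "card D' \<le> card D" if "D' \<in> F" for D' unfolding Dn n_def using fF that by (intro Max_ge) auto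
  have so: "selforth S D" and AD: "A \<subseteq> D" using DF unfolding F_def by auto
  have L: "lin_code S D" and O: "\<forall>a\<in>D. \<forall>b\<in>D. ip S a b = 0" using so by (auto simp: selforth_def)
  have fD: "finite D" using finite_subset[OF lin_code_sub[OF L] finite_vecs[OF S]] .
  have maxy: "y \<in> D" if y: "y \<in> vecs S" "ip S y y = 0" "\<forall>d\<in>D. ip S d y = 0" for y
  proof (rule ccontr)
    assume yD: "y \<notin> D"
    let ?D' = "D \<union> (\<lambda>d. d + y) ` D"
    have "?D' \<in> F" using extend_so[OF so y] AD unfolding F_def by blast
    then have le: "card ?D' \<le> card D" by (rule maxc)
    have disj: "D \<inter> (\<lambda>d. d + y) ` D = {}"
    proof (rule ccontr)
      assume "D \<inter> (\<lambda>d. d + y) ` D \<noteq> {}"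
      then obtain d1 d2 where "d1 \<in> D" "d2 \<in> D" "d1 = d2 + y" by blast
      moreover have "y = d2 + d1" using \<open>d1 = d2 + y\<close>
        by (simp add: add.assoc[symmetric])
      ultimately show False using yD lin_code_add[OF L, of d2 d1] by metis
    qed
    have inj: "inj_on (\<lambda>d. d + y) D" by (intro inj_onI) simp
    have "card ?D' = card D + card D" using card_Un_disjoint[OF fD finite_imageI[OF fD] disj] card_image[OF inj] by simp
    moreover have "card D > 0" using fD lin_code_zero[OF L] card_gt_0_iff by blast
    ultimately show False using le by simp
  qed
  define one where "one = (\<lambda>i. if i \<in> S then (1::bit) else 0)"
  have one_v: "one \<in> vecs S" by (simp add: one_def vecs_def)
  have ip_one: "ip S y one = ip S y y" for y
    unfolding ip_def one_def by (intro sum.cong) auto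
  have "ip S one one = 0"
  proof -
    have "ip S one one = (\<Sum>i\<in>S. (1::bit))" unfolding ip_def one_def by (intro sum.cong) auto
    also have "\<dots> = 0" using sum_bits_card[OF S] ev by simp
    finally show ?thesis .
  qed
  moreover have "\<forall>d\<in>D. ip S d one = 0" using ip_one O by simp
  ultimately have oneD: "one \<in> D" using maxy one_v by blast
  have dD: "dual S D = D"
  proof
    show "dual S D \<subseteq> D"
    proof
      fix y assume y: "y \<in> dual S D"
      then have yv: "y \<in> vecs S" and yo: "\<forall>x\<in>D. ip S x y = 0" by (auto simp: dual_def)
      have "ip S y y = 0" using ip_one[of y] yo oneD ip_comm[of S y one] by simp
      moreover have "\<forall>d\<in>D. ip S d y = 0" using yo .
      ultimately show "y \<in> D" using maxy yv by blast
    qed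
    show "D \<subseteq> dual S D" using O lin_code_sub[OF L] unfolding dual_def by blast
  qed
  obtain B where B: "finite B" "B \<subseteq> D" "indep2 B" "span2 B = D" using basis_exists[OF S L] by blast
  have cD: "card D = 2 ^ card B" using card_span2[OF B(1,3)] B(4) by simp
  have BV: "B \<subseteq> vecs S" using B(2) lin_code_sub[OF L] by blast
  have "card (perpB S B) * 2 ^ card B = 2 ^ card S" using count_perp[OF S B(1) BV B(3)] .
  moreover have "perpB S B = D" using dual_span2[OF B(1), of S] B(4) dD by simp
  ultimately have "2 ^ (card B + card B) = (2::nat) ^ card S" using cD by (simp add: power_add)
  then have "card B + card B = card S" by simp
  then have "card B = card S div 2" by simp
  then have "has_dim D (card S div 2)" unfolding has_dim_def using B by blast
  then show ?thesis using L AD dD by blast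
qed



lemma pts_vecs: "pts m = vecs {..<m}"
  by (auto simp: pts_def vecs_def)
lemma finite_pts: "finite (pts m)"
  unfolding pts_vecs by (rule finite_vecs) simp

definition mon :: "nat \<Rightarrow> (nat \<Rightarrow> nat) \<Rightarrow> (nat \<Rightarrow> bit) \<Rightarrow> bit" where
  "mon m e p = (\<Prod>i<m. p i ^ e i)"

lemma RM_iff: "f \<in> RM r m \<longleftrightarrow>
  (\<exists>c. f = (\<lambda>p. if p \<in> pts m then (\<Sum>e\<in>rm_monos m r. c e * mon m e p) else 0))"
  unfolding RM_def mon_def by blast

lemma finite_rm_monos: "finite (rm_monos m r)"
proof -
  let ?L = "{xs. set xs \<subseteq> {..r} \<and> length xs = m}"
  have inj: "inj_on (\<lambda>e. map e [0..<m]) (rm_monos m r)"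
  proof (rule inj_onI)
    fix e e' assume e: "e \<in> rm_monos m r" and e': "e' \<in> rm_monos m r"
      and eq: "map e [0..<m] = map e' [0..<m]"
    show "e = e'"
    proof
      fix i show "e i = e' i"
      proof (cases "i < m")
        case True
        then show ?thesis using arg_cong[OF eq, of "\<lambda>xs. xs ! i"] by simp
      next
        case False
        then show ?thesis using e e' by (auto simp: rm_monos_def)
      qed
    qed
  qed
  have "(\<lambda>e. map e [0..<m]) ` rm_monos m r \<subseteq> ?L"
  proof
    fix xs assume "xs \<in> (\<lambda>e. map e [0..<m]) ` rm_monos m r"
    then obtain e where e: "e \<in> rm_monos m r" and xs: "xs = map e [0..<m]" by blast
    have "e i \<le> r" if "i < m" for i
    proof -
      have "e i \<le> (\<Sum>i<m. e i)" using that by (intro member_le_sum) auto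
      then show ?thesis using e by (auto simp: rm_monos_def)
    qed
    then show "xs \<in> ?L" using xs by auto
  qed
  moreover have "finite ?L" by (intro finite_lists_length_eq) simp
  ultimately show ?thesis using finite_imageD[OF _ inj] finite_subset by blast
qed

lemma RM_vecs: "RM r m \<subseteq> vecs (pts m)"
  by (auto simp: RM_def vecs_def)

lemma lin_code_RM: "lin_code (pts m) (RM r m)"
proof (rule lin_codeI)
  show "RM r m \<subseteq> vecs (pts m)" by (rule RM_vecs)
  show "0 \<in> RM r m" unfolding RM_iff by (rule exI[of _ "\<lambda>_. 0"]) (simp add: fun_eq_iff)
  fix x y assume "x \<in> RM r m" "y \<in> RM r m"
  then obtain c1 c2 where x: "x = (\<lambda>p. if p \<in> pts m then (\<Sum>e\<in>rm_monos m r. c1 e * mon m e p) else 0)"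
    and y: "y = (\<lambda>p. if p \<in> pts m then (\<Sum>e\<in>rm_monos m r. c2 e * mon m e p) else 0)"
    unfolding RM_iff by blast
  have "x + y = (\<lambda>p. if p \<in> pts m then (\<Sum>e\<in>rm_monos m r. (c1 e + c2 e) * mon m e p) else 0)"
    unfolding x y by (simp add: fun_eq_iff distrib_right sum.distrib)
  then show "x + y \<in> RM r m" unfolding RM_iff by (intro exI[where x="\<lambda>e. c1 e + c2 e"]) simp
qed

lemma RM_mono: assumes "r \<le> r'" shows "RM r m \<subseteq> RM r' m"
proof
  fix f assume "f \<in> RM r m"
  then obtain c where f: "f = (\<lambda>p. if p \<in> pts m then (\<Sum>e\<in>rm_monos m r. c e * mon m e p) else 0)"
    unfolding RM_iff by blast
  define c' where "c' e = (if e \<in> rm_monos m r then c e else 0)" for e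
  have sub: "rm_monos m r \<subseteq> rm_monos m r'" using assms by (auto simp: rm_monos_def)
  have "(\<Sum>e\<in>rm_monos m r. c e * mon m e p) = (\<Sum>e\<in>rm_monos m r'. c' e * mon m e p)" for p
    by (rule sum.mono_neutral_cong_left[OF finite_rm_monos sub]) (auto simp: c'_def)
  then have "f = (\<lambda>p. if p \<in> pts m then (\<Sum>e\<in>rm_monos m r'. c' e * mon m e p) else 0)"
    unfolding f by (intro ext) auto
  then show "f \<in> RM r' m" unfolding RM_iff by blast
qed

lemma sum_pts_flip:
  assumes j: "j < m" and inv: "\<And>p. p \<in> pts m \<Longrightarrow> p j = 0 \<Longrightarrow> f (p(j:=1)) = f p"
  shows "(\<Sum>p\<in>pts m. f p) = (0::bit)"
proof -
  define P0 where "P0 = {p \<in> pts m. p j = 0}"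
  define P1 where "P1 = {p \<in> pts m. p j = 1}"
  have split: "pts m = P0 \<union> P1" unfolding P0_def P1_def by auto
  have disj: "P0 \<inter> P1 = {}" unfolding P0_def P1_def by auto
  have fin: "finite P0" "finite P1" using finite_pts unfolding P0_def P1_def by auto
  have img: "P1 = (\<lambda>p. p(j:=1)) ` P0"
  proof
    show "P1 \<subseteq> (\<lambda>p. p(j:=1)) ` P0"
    proof
      fix p assume p: "p \<in> P1"
      then have "p(j:=0) \<in> P0" using j by (auto simp: P0_def P1_def pts_def)
      moreover have "p = (p(j:=0))(j:=1)" using p by (auto simp: P1_def fun_eq_iff)
      ultimately show "p \<in> (\<lambda>p. p(j:=1)) ` P0" by blast
    qed
    show "(\<lambda>p. p(j:=1)) ` P0 \<subseteq> P1" using j by (auto simp: P0_def P1_def pts_def)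
  qed
  have inj: "inj_on (\<lambda>p. p(j:=1)) P0"
  proof (rule inj_onI)
    fix p q assume pq: "p \<in> P0" "q \<in> P0" "p(j:=1) = q(j:=1)"
    show "p = q"
    proof
      fix i show "p i = q i"
      proof (cases "i = j")
        case True then show ?thesis using pq(1,2) by (simp add: P0_def)
      next
        case False then show ?thesis using arg_cong[OF pq(3), of "\<lambda>f. f i"] by simp
      qed
    qed
  qed
  have "(\<Sum>p\<in>P1. f p) = (\<Sum>p\<in>P0. f (p(j:=1)))" unfolding img by (rule sum.reindex[OF inj, unfolded comp_def])
  also have "\<dots> = (\<Sum>p\<in>P0. f p)" using inv by (intro sum.cong) (auto simp: P0_def)
  finally have "(\<Sum>p\<in>P1. f p) = (\<Sum>p\<in>P0. f p)" .
  moreover have "(\<Sum>p\<in>pts m. f p) = (\<Sum>p\<in>P0. f p) + (\<Sum>p\<in>P1. f p)"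
    unfolding split by (rule sum.union_disjoint[OF fin disj])
  ultimately show ?thesis by simp
qed

lemma mon_upd: assumes "e j = 0" shows "mon m e (p(j:=b)) = mon m e p"
  unfolding mon_def using assms by (intro prod.cong) auto

lemma exists_zero_coord:
  assumes "(\<Sum>i<m. (g::nat\<Rightarrow>nat) i) < m" shows "\<exists>j<m. g j = 0"
proof (rule ccontr)
  assume "\<not> ?thesis"
  then have "\<forall>i<m. 1 \<le> g i" by auto
  then have "(\<Sum>i<m. (1::nat)) \<le> (\<Sum>i<m. g i)" by (intro sum_mono) auto
  then show False using assms by simp
qed

lemma triple_prod:
  fixes f g h :: "'a \<Rightarrow> 'b::comm_semiring_1"
  shows "sum f A * sum g B * sum h C = (\<Sum>i\<in>A. \<Sum>j\<in>B. \<Sum>k\<in>C. f i * g j * h k)"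
proof -
  have "sum f A * sum g B * sum h C = (\<Sum>i\<in>A. \<Sum>j\<in>B. f i * g j) * sum h C"
    by (simp only: sum_product)
  also have "\<dots> = (\<Sum>i\<in>A. (\<Sum>j\<in>B. f i * g j) * sum h C)"
    by (rule sum_distrib_right)
  also have "\<dots> = (\<Sum>i\<in>A. \<Sum>j\<in>B. f i * g j * sum h C)"
    by (intro sum.cong refl sum_distrib_right)
  also have "\<dots> = (\<Sum>i\<in>A. \<Sum>j\<in>B. \<Sum>k\<in>C. f i * g j * h k)"
    by (intro sum.cong refl sum_distrib_left)
  finally show ?thesis .
qed

lemma tri_zero:
  assumes x: "x \<in> RM ra m" and y: "y \<in> RM rb m" and z: "z \<in> RM rc m" and deg: "ra + rb + rc < m"
  shows "(\<Sum>p\<in>pts m. x p * y p * z p) = 0"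
proof -
  obtain a where a: "x = (\<lambda>p. if p \<in> pts m then (\<Sum>e\<in>rm_monos m ra. a e * mon m e p) else 0)"
    using x unfolding RM_iff by blast
  obtain b where b: "y = (\<lambda>p. if p \<in> pts m then (\<Sum>e\<in>rm_monos m rb. b e * mon m e p) else 0)"
    using y unfolding RM_iff by blast
  obtain c where c: "z = (\<lambda>p. if p \<in> pts m then (\<Sum>e\<in>rm_monos m rc. c e * mon m e p) else 0)"
    using z unfolding RM_iff by blast
  let ?A = "rm_monos m ra" and ?B = "rm_monos m rb" and ?C = "rm_monos m rc"
  let ?G = "\<lambda>e e' e'' p. (a e * mon m e p) * (b e' * mon m e' p) * (c e'' * mon m e'' p)"
  have expand: "x p * y p * z p = (\<Sum>e\<in>?A. \<Sum>e'\<in>?B. \<Sum>e''\<in>?C. ?G e e' e'' p)" if "p \<in> pts m" for p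
  proof -
    have xp: "x p = (\<Sum>e\<in>?A. a e * mon m e p)" using that by (simp add: a)
    have yp: "y p = (\<Sum>e\<in>?B. b e * mon m e p)" using that by (simp add: b)
    have zp: "z p = (\<Sum>e\<in>?C. c e * mon m e p)" using that by (simp add: c)
    show ?thesis unfolding xp yp zp
      by (fact triple_prod[of "\<lambda>e. a e * mon m e p" ?A "\<lambda>e. b e * mon m e p" ?B "\<lambda>e. c e * mon m e p" ?C])
  qed
  have inner: "(\<Sum>p\<in>pts m. ?G e e' e'' p) = 0" if "e \<in> ?A" "e' \<in> ?B" "e'' \<in> ?C" for e e' e''
  proof -
    have q1: "(\<Sum>i<m. e i + e' i + e'' i) = (\<Sum>i<m. e i) + (\<Sum>i<m. e' i) + (\<Sum>i<m. e'' i)"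
      by (simp add: sum.distrib)
    have q2: "(\<Sum>i<m. e i) + (\<Sum>i<m. e' i) + (\<Sum>i<m. e'' i) < m" using that deg by (auto simp: rm_monos_def)
    have "\<exists>j<m. e j + e' j + e'' j = 0" using q1 q2 by (intro exists_zero_coord) simp
    then obtain j where j0: "j < m \<and> e j + e' j + e'' j = 0" by (elim exE) (rule that)
    from j0 have j: "j < m" "e j + e' j + e'' j = 0" by simp_all
    have G: "?G e e' e'' p = (a e * b e' * c e'') * (mon m e p * mon m e' p * mon m e'' p)" for p
      by (simp only: mult_ac)
    have s1: "(\<Sum>p\<in>pts m. ?G e e' e'' p) = (a e * b e' * c e'') * (\<Sum>p\<in>pts m. mon m e p * mon m e' p * mon m e'' p)"
      unfolding G by (rule sum_distrib_left[symmetric])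
    have s2: "(\<Sum>p\<in>pts m. mon m e p * mon m e' p * mon m e'' p) = 0"
      using j by (intro sum_pts_flip[OF j(1)]) (simp add: mon_upd)
    show ?thesis unfolding s1 s2 by simp
  qed
  have "(\<Sum>p\<in>pts m. x p * y p * z p) = (\<Sum>p\<in>pts m. \<Sum>e\<in>?A. \<Sum>e'\<in>?B. \<Sum>e''\<in>?C. ?G e e' e'' p)"
    using expand by (intro sum.cong) auto
  also have "\<dots> = (\<Sum>e\<in>?A. \<Sum>p\<in>pts m. \<Sum>e'\<in>?B. \<Sum>e''\<in>?C. ?G e e' e'' p)" by (rule sum.swap)
  also have "\<dots> = (\<Sum>e\<in>?A. \<Sum>e'\<in>?B. \<Sum>p\<in>pts m. \<Sum>e''\<in>?C. ?G e e' e'' p)"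
    by (intro sum.cong refl sum.swap)
  also have "\<dots> = (\<Sum>e\<in>?A. \<Sum>e'\<in>?B. \<Sum>e''\<in>?C. \<Sum>p\<in>pts m. ?G e e' e'' p)"
    by (intro sum.cong refl sum.swap)
  also have "\<dots> = 0" using inner by (simp add: sum.neutral)
  finally show ?thesis .
qed



definition monoJ :: "nat \<Rightarrow> nat set \<Rightarrow> (nat \<Rightarrow> bit) \<Rightarrow> bit" where
  "monoJ m J = (\<lambda>p. if p \<in> pts m then (\<Prod>i\<in>J. p i) else 0)"

lemma monoJ_RM:
  assumes J: "J \<subseteq> {..<m}" and cJ: "card J \<le> r"
  shows "monoJ m J \<in> RM r m"
proof -
  define eJ where "eJ = (\<lambda>i. if i \<in> J then 1 else 0::nat)"
  have fJ: "finite J" using J finite_subset by blast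
  have "(\<Sum>i<m. eJ i) = card ({..<m} \<inter> J)"
    unfolding eJ_def by (simp add: sum.If_cases)
  also have "{..<m} \<inter> J = J" using J by blast
  finally have sJ: "(\<Sum>i<m. eJ i) = card J" .
  have eJm: "eJ \<in> rm_monos m r" unfolding rm_monos_def using sJ cJ J by (auto simp: eJ_def)
  have monJ: "mon m eJ p = (\<Prod>i\<in>J. p i)" for p
  proof -
    have "mon m eJ p = (\<Prod>i<m. if i \<in> J then p i else 1)"
      unfolding mon_def eJ_def by (intro prod.cong) auto
    also have "\<dots> = (\<Prod>i\<in>{..<m} \<inter> J. p i)" using prod.inter_restrict[of "{..<m}" p J] by simp
    also have "{..<m} \<inter> J = J" using J by blast
    finally show ?thesis .
  qed
  have sJp: "(\<Sum>e\<in>rm_monos m r. (if e = eJ then 1 else 0) * mon m e p) = mon m eJ p" for p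
  proof -
    have "(\<Sum>e\<in>rm_monos m r. (if e = eJ then 1 else 0) * mon m e p)
        = (\<Sum>e\<in>rm_monos m r. if e = eJ then mon m e p else 0)"
      by (intro sum.cong) auto
    also have "\<dots> = mon m eJ p" using eJm finite_rm_monos by (simp add: sum.delta')
    finally show ?thesis .
  qed
  have "monoJ m J = (\<lambda>p. if p \<in> pts m then (\<Sum>e\<in>rm_monos m r. (if e = eJ then 1 else 0) * mon m e p) else 0)"
    unfolding monoJ_def sJp monJ ..
  then show ?thesis unfolding RM_iff by (intro exI[where x="\<lambda>e. if e = eJ then 1 else 0"])
qed

lemma sum_all_ones: "(\<Sum>p\<in>pts m. (\<Prod>i<m. p i)) = (1::bit)"
proof -
  define q where "q = (\<lambda>i. if i < m then 1 else (0::bit))"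
  have qp: "q \<in> pts m" by (simp add: q_def pts_def)
  have "(\<Prod>i<m. p i) = (if p = q then 1 else 0)" if p: "p \<in> pts m" for p
  proof (cases "p = q")
    case True then show ?thesis by (simp add: q_def)
  next
    case False
    then obtain i where "p i \<noteq> q i" by auto
    moreover have "i < m"
    proof (rule ccontr)
      assume "\<not> i < m" then have "p i = 0" "q i = 0" using p by (auto simp: pts_def q_def)
      then show False using \<open>p i \<noteq> q i\<close> by simp
    qed
    ultimately have "p i = 0" "i < m" by (auto simp: q_def)
    then have "(\<Prod>i<m. p i) = 0" by (intro prod_zero) auto
    then show ?thesis using False by simp
  qed
  then have "(\<Sum>p\<in>pts m. (\<Prod>i<m. p i)) = (\<Sum>p\<in>pts m. if p = q then 1 else 0)"
    by (intro sum.cong) auto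
  also have "\<dots> = 1" using qp finite_pts by (simp add: sum.delta')
  finally show ?thesis .
qed

lemma sum_supp:
  assumes I: "finite I" and x: "x \<in> vecs I"
  shows "(\<Sum>i\<in>supp x. g i) = (\<Sum>i\<in>I. x i * g i)"
proof -
  have sub: "supp x \<subseteq> I" using x by (auto simp: vecs_def supp_def)
  have "(\<Sum>i\<in>supp x. g i) = (\<Sum>i\<in>supp x. x i * g i)"
    by (intro sum.cong) (auto simp: supp_def)
  also have "\<dots> = (\<Sum>i\<in>I. x i * g i)"
    by (rule sum.mono_neutral_left[OF I sub]) (auto simp: supp_def)
  finally show ?thesis .
qed

lemma sum_hw:
  assumes I: "finite I" and x: "x \<in> vecs I"
  shows "(\<Sum>i\<in>I. x i) = (if even (hw x) then 0 else 1)"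
proof -
  have "(\<Sum>i\<in>I. x i) = (\<Sum>i\<in>I. x i * 1)" by simp
  also have "\<dots> = (\<Sum>i\<in>supp x. (1::bit))" using sum_supp[OF I x, of "\<lambda>_. 1"] by simp
  also have "\<dots> = of_nat (hw x)" by (simp add: hw_def)
  finally show ?thesis by (simp add: of_nat_bit)
qed

lemma vecs_mono: "S \<subseteq> T \<Longrightarrow> vecs S \<subseteq> vecs T"
  by (auto simp: vecs_def)

lemma sum_vecs_sub:
  assumes T: "finite T" and ST: "S \<subseteq> T" and d: "d \<in> vecs S"
  shows "(\<Sum>i\<in>T. c i * d i) = (\<Sum>i\<in>S. c i * (d i :: bit))"
  by (rule sum.mono_neutral_right[OF T ST]) (use d in \<open>auto simp: vecs_def\<close>)



lemma supp_one: "i \<in> supp x \<Longrightarrow> x i = (1::bit)"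
  by (simp add: supp_def)
lemma not_supp_zero: "i \<notin> supp x \<Longrightarrow> x i = (0::bit)"
  by (simp add: supp_def)

lemma css_if:
  assumes r: "r2 \<le> r1" and deg: "2 * r1 + r2 < m"
  shows "css_t_pair (pts m) (RM r1 m) (RM r2 m)"
proof -
  have one: "monoJ m {} \<in> RM 0 m" by (rule monoJ_RM) auto
  have one_eq: "monoJ m {} p = 1" if "p \<in> pts m" for p using that by (simp add: monoJ_def)
  have ev: "even (hw x)" if x: "x \<in> RM r2 m" for x
  proof -
    have "(\<Sum>p\<in>pts m. x p * monoJ m {} p * monoJ m {} p) = 0"
      by (rule tri_zero[OF x one one]) (use deg in simp)
    moreover have "(\<Sum>p\<in>pts m. x p * monoJ m {} p * monoJ m {} p) = (\<Sum>p\<in>pts m. x p)"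
      using one_eq by (intro sum.cong) auto
    moreover have "(\<Sum>p\<in>pts m. x p) = (if even (hw x) then 0 else 1)"
      using sum_hw[OF finite_pts] x RM_vecs by blast
    ultimately show ?thesis by (auto split: if_splits)
  qed
  have cx: "\<exists>Cx. lin_code (pts m) Cx \<and> Cx \<subseteq> dual (pts m) (RM r1 m) \<and> has_dim Cx (hw x div 2) \<and>
        Cx \<subseteq> vecs (supp x) \<and> dual (supp x) Cx = Cx" if x: "x \<in> RM r2 m" for x
  proof -
    define S where "S = supp x"
    have xv: "x \<in> vecs (pts m)" using x RM_vecs by blast
    have Ssub: "S \<subseteq> pts m" using xv by (auto simp: S_def supp_def vecs_def)
    have Sfin: "finite S" using finite_subset[OF Ssub finite_pts] .
    define A where "A = (\<lambda>c. x * c) ` RM r1 m"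
    have L1: "lin_code (pts m) (RM r1 m)" by (rule lin_code_RM)
    have linA: "lin_code S A"
    proof (rule lin_codeI)
      show "A \<subseteq> vecs S" unfolding A_def S_def by (auto simp: vecs_def supp_def)
      have "x * 0 = 0" by (simp add: fun_eq_iff)
      then show "0 \<in> A" unfolding A_def using lin_code_zero[OF L1] by (metis image_eqI)
      fix a b assume "a \<in> A" "b \<in> A"
      then obtain c1 c2 where c: "c1 \<in> RM r1 m" "c2 \<in> RM r1 m" "a = x * c1" "b = x * c2"
        unfolding A_def by blast
      have "a + b = x * (c1 + c2)" unfolding c by (simp add: fun_eq_iff distrib_left)
      then show "a + b \<in> A" unfolding A_def using lin_code_add[OF L1 c(1,2)] by blast
    qed
    have orth: "ip S (x * c) (x * c') = 0" if c: "c \<in> RM r1 m" "c' \<in> RM r1 m" for c c'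
    proof -
      have "ip S (x * c) (x * c') = (\<Sum>i\<in>S. c i * c' i)"
        unfolding ip_def S_def by (intro sum.cong) (auto simp: supp_one)
      also have "\<dots> = (\<Sum>i\<in>pts m. x i * (c i * c' i))"
        unfolding S_def by (rule sum_supp[OF finite_pts xv])
      also have "\<dots> = (\<Sum>p\<in>pts m. x p * c p * c' p)" by (simp add: mult.assoc)
      also have "\<dots> = 0" by (rule tri_zero[OF x c]) (use deg in simp)
      finally show ?thesis .
    qed
    have soA: "selforth S A" unfolding selforth_def using linA orth unfolding A_def by blast
    have evS: "even (card S)" using ev[OF x] by (simp add: S_def hw_def)
    obtain D where D: "lin_code S D" "A \<subseteq> D" "dual S D = D" "has_dim D (card S div 2)"
      using self_dual_ext[OF Sfin evS soA] by blast
    have DS: "D \<subseteq> vecs S" using lin_code_sub[OF D(1)] .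
    have DP: "D \<subseteq> vecs (pts m)" using DS vecs_mono[OF Ssub] by blast
    have linD: "lin_code (pts m) D" using D(1) DP unfolding lin_code_def by blast
    have Ddual: "D \<subseteq> dual (pts m) (RM r1 m)"
    proof
      fix d assume d: "d \<in> D"
      have "ip (pts m) c d = 0" if c: "c \<in> RM r1 m" for c
      proof -
        have "ip (pts m) c d = (\<Sum>i\<in>S. c i * d i)"
          unfolding ip_def using sum_vecs_sub[OF finite_pts Ssub] d DS by blast
        also have "\<dots> = ip S (x * c) d"
          unfolding ip_def S_def by (intro sum.cong) (auto simp: supp_one)
        also have "\<dots> = 0"
        proof -
          have "x * c \<in> D" using D(2) c unfolding A_def by blast
          moreover have "d \<in> dual S D" using D(3) d by simp
          ultimately show ?thesis unfolding dual_def by blast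
        qed
        finally show ?thesis .
      qed
      then show "d \<in> dual (pts m) (RM r1 m)" unfolding dual_def using DP d by blast
    qed
    show ?thesis
      using linD Ddual D(3,4) DS unfolding S_def hw_def by blast
  qed
  show ?thesis unfolding css_t_pair_def
    using lin_code_RM RM_mono[OF r] ev cx by blast
qed

lemma css_onlyif:
  assumes r: "r2 \<le> r1" and deg: "m \<le> 2 * r1 + r2" and s: "r1 + r2 \<le> m"
  shows "\<not> css_t_pair (pts m) (RM r1 m) (RM r2 m)"
proof
  assume css: "css_t_pair (pts m) (RM r1 m) (RM r2 m)"
  define x where "x = monoJ m {..<r2}"
  define c where "c = monoJ m {r2..<r2+r1}"
  define c' where "c' = monoJ m {r2+r1..<m}"
  have x: "x \<in> RM r2 m" unfolding x_def by (rule monoJ_RM) (use s in auto)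
  have c: "c \<in> RM r1 m" unfolding c_def by (rule monoJ_RM) (use s in auto)
  have c': "c' \<in> RM r1 m" unfolding c'_def by (rule monoJ_RM) (use s deg in auto)
  obtain Cx where Cx: "lin_code (pts m) Cx" "Cx \<subseteq> dual (pts m) (RM r1 m)"
     "Cx \<subseteq> vecs (supp x)" "dual (supp x) Cx = Cx"
    using css x unfolding css_t_pair_def by blast
  define S where "S = supp x"
  have xv: "x \<in> vecs (pts m)" using x RM_vecs by blast
  have Ssub: "S \<subseteq> pts m" using xv by (auto simp: S_def supp_def vecs_def)
  have key: "x * g \<in> Cx" if g: "g \<in> RM r1 m" for g
  proof -
    have "x * g \<in> vecs S" by (auto simp: vecs_def S_def supp_def)
    moreover have "ip S z (x * g) = 0" if z: "z \<in> Cx" for z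
    proof -
      have zS: "z \<in> vecs S" using z Cx(3) S_def by blast
      have "ip S z (x * g) = (\<Sum>i\<in>S. g i * z i)"
        unfolding ip_def S_def by (intro sum.cong) (auto simp: supp_one mult.commute)
      also have "\<dots> = ip (pts m) g z"
        unfolding ip_def using sum_vecs_sub[OF finite_pts Ssub zS] by simp
      also have "\<dots> = 0" using z Cx(2) g unfolding dual_def by blast
      finally show ?thesis .
    qed
    ultimately have "x * g \<in> dual S Cx" unfolding dual_def by blast
    then show ?thesis using Cx(4) S_def by simp
  qed
  have "x * c \<in> dual S Cx" using key[OF c] Cx(4) S_def by simp
  then have zero: "ip S (x * c') (x * c) = 0" using key[OF c'] unfolding dual_def by blast
  have "ip S (x * c') (x * c) = (\<Sum>i\<in>S. c' i * c i)"
    unfolding ip_def S_def by (intro sum.cong) (auto simp: supp_one)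
  also have "\<dots> = (\<Sum>p\<in>pts m. x p * (c' p * c p))"
    unfolding S_def by (rule sum_supp[OF finite_pts xv])
  also have "\<dots> = (\<Sum>p\<in>pts m. (\<Prod>i<m. p i))"
  proof (intro sum.cong refl)
    fix p assume p: "p \<in> pts m"
    have "x p * (c' p * c p) = (\<Prod>i\<in>{0..<r2}. p i) * (\<Prod>i\<in>{r2..<r2+r1}. p i) * (\<Prod>i\<in>{r2+r1..<m}. p i)"
      using p by (simp add: x_def c_def c'_def monoJ_def lessThan_atLeast0 mult_ac)
    also have "\<dots> = (\<Prod>i\<in>{0..<m}. p i)"
      using s by (simp add: prod.atLeastLessThan_concat)
    finally show "x p * (c' p * c p) = (\<Prod>i<m. p i)" by (simp add: lessThan_atLeast0)
  qed
  also have "\<dots> = 1" by (rule sum_all_ones)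
  finally show False using zero by simp
qed

theorem mainTheorem3:
  fixes m t r2 :: nat
  assumes "m \<ge> 2" and "r2 + t \<le> (m - 1) div 2"
  shows "css_t_pair (pts m) (RM ((m - 1) div 2 - t) m) (RM r2 m) \<longleftrightarrow>
         (if even m then r2 \<le> 2 * t + 1 else r2 \<le> 2 * t)"
proof -
  define r1 where "r1 = (m - 1) div 2 - t"
  have r: "r2 \<le> r1" "r1 + r2 \<le> m" using assms unfolding r1_def by auto
  have cond: "(if even m then r2 \<le> 2 * t + 1 else r2 \<le> 2 * t) \<longleftrightarrow> 2 * r1 + r2 < m"
  proof (cases "even m")
    case True
    then obtain b where b: "m = 2 * b" by (auto elim!: evenE)
    have "(m - 1) div 2 = b - 1" using b assms(1) by (cases b) auto
    then show ?thesis using True assms b unfolding r1_def by auto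
  next
    case False
    then obtain b where b: "m = 2 * b + 1" by (auto elim!: oddE)
    have "(m - 1) div 2 = b" using b by simp
    then show ?thesis using False assms b unfolding r1_def by auto
  qed
  show ?thesis
  proof (cases "2 * r1 + r2 < m")
    case True
    then show ?thesis using css_if[OF r(1) True] cond unfolding r1_def by simp
  next
    case False
    then show ?thesis using css_onlyif[OF r(1) _ r(2)] cond unfolding r1_def by simp
  qed
qed

end
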